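(* Let $\mathcal{W}$ be a finite set and $(X_t)_{t\ge1}$ a time-homogeneous first-order Markov chain on $\mathcal{W}$ with initial distribution $p_{x_1}$ and transition probabilities $q_x(x_{t+1}\mid x_t)$. For any history-dependent release policy $\boldsymbol q_h\in\mathcal{Q}_H$ there exists a policy $\boldsymbol q_s\in\mathcal{Q}_S$ such that, for every $n\ge1$, $$\sum_{t=1}^n I^{\boldsymbol q_h}(X_t,X_{t-1};Y_t\mid Y^{t-1})=\sum_{t=1}^n I^{\boldsymbol q_s}(X_t,X_{t-1};Y_t\mid Y^{t-1}).$$
   Context: Notation: $X^t=(X_1,\dots,X_t)$, $Y^{t-1}=(Y_1,\dots,Y_{t-1})$, $Y^0$ empty; at $t=1$ terms involving $X_0$ are absent. A history-dependent release policy is a sequence $\boldsymbol q=\{q_t(y_t\mid x^t,y^{t-1})\}_{t\ge1}$ of conditional probability distributions on $\mathcal{W}$; $\mathcal{Q}_H$ is the set of all such policies. The released locations $Y_t\in\mathcal W$ and true locations have joint law $$P^{\boldsymbol q}(X^n=x^n,Y^n=y^n)=p_{x_1}(x_1)q_1(y_1\mid x_1)\prod_{t=2}^n q_x(x_t\mid x_{t-1})\,q_t(y_t\mid x^t,y^{t-1}),$$ and $I^{\boldsymbol q}$ denotes mutual information under this law. $\mathcal{Q}_S\subseteq\mathcal{Q}_H$ is the set of policies of the form $q_t(y_t\mid x_t,x_{t-1},y^{t-1})$, depending on the true trajectory only through $(x_t,x_{t-1})$. *)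

theory Defs
  imports Complex_Main
begin

text \<open>The finite location set W is modelled by a finite type 'w.
  Trajectories x^n and releases y^n are lists of length n (index t is position t-1).\<close>

definition is_dist :: "('w::finite \<Rightarrow> real) \<Rightarrow> bool" where
  "is_dist d \<longleftrightarrow> (\<forall>w. 0 \<le> d w) \<and> (\<Sum>w\<in>UNIV. d w) = 1"

text \<open>A release policy: q t xs ys y = q_t(y | x^t = xs, y^(t-1) = ys).\<close>
type_synonym 'w policy = "nat \<Rightarrow> 'w list \<Rightarrow> 'w list \<Rightarrow> 'w \<Rightarrow> real"

definition policy_H :: "'w::finite policy \<Rightarrow> bool" where
  "policy_H q \<longleftrightarrow> (\<forall>t\<ge>1. \<forall>xs ys. length xs = t \<and> length ys = t - 1 \<longrightarrow> is_dist (q t xs ys))"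

text \<open>Membership in Q_S: a history-dependent policy that depends on x^t only through
  (x_t, x_(t-1)) (only x_1 at t = 1).\<close>
definition policy_S :: "'w::finite policy \<Rightarrow> bool" where
  "policy_S q \<longleftrightarrow> policy_H q \<and>
     (\<forall>t\<ge>1. \<forall>xs xs' ys. length xs = t \<and> length xs' = t \<and> length ys = t - 1 \<and>
        drop (t - 2) xs = drop (t - 2) xs' \<longrightarrow> q t xs ys = q t xs' ys)"

text \<open>Joint law P^q(X^n = xs, Y^n = ys), for lists of length n \<ge> 1;
  p1 is the initial distribution, Qx a b = q_x(b | a) the transition kernel.\<close>
definition joint :: "('w \<Rightarrow> real) \<Rightarrow> ('w \<Rightarrow> 'w \<Rightarrow> real) \<Rightarrow> 'w policy \<Rightarrow> nat \<Rightarrow> 'w list \<Rightarrow> 'w list \<Rightarrow> real" where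
  "joint p1 Qx q n xs ys =
     p1 (xs ! 0) * q 1 (take 1 xs) [] (ys ! 0) *
     (\<Prod>t\<in>{2..n}. Qx (xs ! (t - 2)) (xs ! (t - 1)) * q t (take t xs) (take (t - 1) ys) (ys ! (t - 1)))"

definition prob_ev :: "('w::finite \<Rightarrow> real) \<Rightarrow> ('w \<Rightarrow> 'w \<Rightarrow> real) \<Rightarrow> 'w policy \<Rightarrow> nat
     \<Rightarrow> ('w list \<Rightarrow> 'w list \<Rightarrow> bool) \<Rightarrow> real" where
  "prob_ev p1 Qx q n E =
     (\<Sum>xs\<in>{xs. length xs = n}. \<Sum>ys\<in>{ys. length ys = n}. if E xs ys then joint p1 Qx q n xs ys else 0)"

text \<open>I^q(X_t, X_(t-1); Y_t | Y^(t-1)) computed under the law P^q on (X^n, Y^n), 1 \<le> t \<le> n.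
  The pair (X_t, X_(t-1)) is represented by the list drop (t-2) (take t x^n),
  which is [x_1] for t = 1 (X_0 absent) and [x_(t-1), x_t] for t \<ge> 2.
  Standard discrete conditional mutual information (base-2 logarithm, 0 log 0 = 0).\<close>
definition cmi :: "('w::finite \<Rightarrow> real) \<Rightarrow> ('w \<Rightarrow> 'w \<Rightarrow> real) \<Rightarrow> 'w policy \<Rightarrow> nat \<Rightarrow> nat \<Rightarrow> real" where
  "cmi p1 Qx q n t =
     (let P = prob_ev p1 Qx q n;
          A = (\<lambda>xs. drop (t - 2) (take t xs));
          C = (\<lambda>ys. take (t - 1) ys);
          B = (\<lambda>ys. ys ! (t - 1))
      in \<Sum>u\<in>{u. length u = min t 2}. \<Sum>y\<in>UNIV. \<Sum>c\<in>{c. length c = t - 1}.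
           (let pabc = P (\<lambda>xs ys. A xs = u \<and> B ys = y \<and> C ys = c);
                pac = P (\<lambda>xs ys. A xs = u \<and> C ys = c);
                pbc = P (\<lambda>xs ys. B ys = y \<and> C ys = c);
                pc = P (\<lambda>xs ys. C ys = c)
            in if pabc = 0 then 0 else pabc * log 2 ((pabc * pc) / (pac * pbc))))"

end

theory Submission
  imports Defs
begin

lemma finite_len: "finite {xs::'w::finite list. length xs = n}"
  using finite_lists_length_eq[of "UNIV::'w set" n] by simp

lemma sum_snoc:
  "(\<Sum>xs\<in>{xs::'w::finite list. length xs = Suc n}. g xs) =
   (\<Sum>xs\<in>{xs. length xs = n}. \<Sum>b\<in>UNIV. g (xs @ [b]))"
proof -
  have eq: "{xs::'w list. length xs = Suc n} = (\<lambda>(xs,b). xs @ [b]) ` ({xs. length xs = n} \<times> UNIV)"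
  proof (rule set_eqI, rule iffI)
    fix xs :: "'w list" assume "xs \<in> {xs. length xs = Suc n}"
    then have "xs \<noteq> []" "length (butlast xs) = n" by auto
    then have "xs = (\<lambda>(xs,b). xs @ [b]) (butlast xs, last xs)" by simp
    then show "xs \<in> (\<lambda>(xs,b). xs @ [b]) ` ({xs. length xs = n} \<times> UNIV)"
      using \<open>length (butlast xs) = n\<close> by blast
  qed auto
  have inj: "inj_on (\<lambda>(xs,b). xs @ [b]) ({xs::'w list. length xs = n} \<times> UNIV)"
    by (auto simp: inj_on_def)
  show ?thesis
    unfolding eq sum.reindex[OF inj] sum.cartesian_product by (simp add: split_def)
qed

lemma drop_last1: "length xs = Suc m \<Longrightarrow> drop m xs = [last xs]"
proof (induction xs arbitrary: m)
  case Nil then show ?case by simp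
next
  case (Cons a xs) then show ?case by (cases m) (auto simp: drop_Suc)
qed

lemma joint_snoc:
  assumes "length xs = n" "length ys = n" "n \<ge> 1"
  shows "joint p1 Qx q (Suc n) (xs @ [b]) (ys @ [y]) =
         joint p1 Qx q n xs ys * (Qx (last xs) b * q (Suc n) (xs @ [b]) ys y)"
proof -
  have I: "{2..Suc n} = insert (Suc n) {2..n}" using assms by auto
  have P: "(\<Prod>t\<in>{2..n}. Qx ((xs@[b]) ! (t - 2)) ((xs@[b]) ! (t - 1)) *
              q t (take t (xs@[b])) (take (t - 1) (ys@[y])) ((ys@[y]) ! (t - 1))) =
           (\<Prod>t\<in>{2..n}. Qx (xs ! (t - 2)) (xs ! (t - 1)) *
              q t (take t xs) (take (t - 1) ys) (ys ! (t - 1)))"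
    by (rule prod.cong) (use assms in \<open>auto simp: nth_append\<close>)
  have L: "last xs = xs ! (n - 1)" using assms by (subst last_conv_nth) auto
  show ?thesis
    unfolding joint_def I
    apply (subst prod.insert)
    using assms apply simp
    using assms apply simp
    unfolding P
    using assms apply (simp add: L nth_append)
    done
qed

lemma group_last:
  fixes S :: "'w::finite list set" and \<phi> :: "'w \<Rightarrow> real" and \<psi> :: "'w list \<Rightarrow> real"
  assumes "finite S"
  shows "(\<Sum>xs\<in>S. \<phi> (last xs) * \<psi> xs) = (\<Sum>a\<in>UNIV. \<phi> a * (\<Sum>xs\<in>S. if last xs = a then \<psi> xs else 0))"
proof -
  have "(\<Sum>a\<in>UNIV. \<phi> a * (\<Sum>xs\<in>S. if last xs = a then \<psi> xs else 0)) =
        (\<Sum>a\<in>UNIV. \<Sum>xs\<in>S. if last xs = a then \<phi> a * \<psi> xs else 0)"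
    unfolding sum_distrib_left by (intro sum.cong refl) simp
  also have "\<dots> = (\<Sum>xs\<in>S. \<Sum>a\<in>UNIV. if last xs = a then \<phi> a * \<psi> xs else 0)"
    by (rule sum.swap)
  also have "\<dots> = (\<Sum>xs\<in>S. \<phi> (last xs) * \<psi> xs)"
    by (simp add: eq_commute[of "last _"])
  finally show ?thesis by simp
qed

lemma joint_nonneg:
  assumes "is_dist p1" "\<forall>a. is_dist (Qx a)" "policy_H q"
    and "length xs = n" "length ys = n" "n \<ge> 1"
  shows "joint p1 Qx q n xs ys \<ge> 0"
proof -
  have d: "\<And>t xs ys w. t \<ge> 1 \<Longrightarrow> length xs = t \<Longrightarrow> length ys = t - 1 \<Longrightarrow> q t xs ys w \<ge> 0"
    using assms(3) unfolding policy_H_def is_dist_def by blast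
  have "p1 (xs!0) \<ge> 0" "\<And>a b. Qx a b \<ge> 0" using assms(1,2) unfolding is_dist_def by auto
  moreover have "q 1 (take 1 xs) [] (ys ! 0) \<ge> 0" using assms by (intro d) auto
  moreover have "\<And>t. t \<in> {2..n} \<Longrightarrow> q t (take t xs) (take (t - 1) ys) (ys ! (t - 1)) \<ge> 0"
    using assms by (intro d) auto
  ultimately show ?thesis unfolding joint_def
    by (intro mult_nonneg_nonneg prod_nonneg) auto
qed

lemma qsum1:
  assumes "policy_H q" "length xs = t" "length ys = t - 1" "t \<ge> 1"
  shows "(\<Sum>y\<in>UNIV. q t xs ys y) = 1"
  using assms unfolding policy_H_def is_dist_def by blast

lemma marg_step:
  assumes "\<forall>a. is_dist (Qx a)" "policy_H q" "1 \<le> t" "t \<le> n"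
    and "length xs = n" "length ys = n"
  shows "(\<Sum>b\<in>UNIV. \<Sum>y\<in>UNIV. f (take t (xs@[b])) (take t (ys@[y])) * joint p1 Qx q (Suc n) (xs@[b]) (ys@[y]))
         = f (take t xs) (take t ys) * joint p1 Qx q n xs ys"
proof -
  let ?C = "f (take t xs) (take t ys) * joint p1 Qx q n xs ys"
  have "(\<Sum>b\<in>UNIV. \<Sum>y\<in>UNIV. f (take t (xs@[b])) (take t (ys@[y])) * joint p1 Qx q (Suc n) (xs@[b]) (ys@[y]))
      = (\<Sum>b\<in>UNIV. \<Sum>y\<in>UNIV. ?C * (Qx (last xs) b * q (Suc n) (xs @ [b]) ys y))"
    using assms by (simp add: joint_snoc mult.assoc)
  also have "\<dots> = ?C * (\<Sum>b\<in>UNIV. Qx (last xs) b * (\<Sum>y\<in>UNIV. q (Suc n) (xs @ [b]) ys y))"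
    by (simp add: sum_distrib_left)
  also have "\<dots> = ?C * (\<Sum>b\<in>UNIV. Qx (last xs) b)"
    using assms by (simp add: qsum1)
  also have "\<dots> = ?C" using assms(1) unfolding is_dist_def by simp
  finally show ?thesis .
qed

lemma marg:
  assumes "\<forall>a. is_dist (Qx a)" "policy_H q" "1 \<le> t" "t \<le> n"
  shows "(\<Sum>xs\<in>{xs::'w::finite list. length xs = n}. \<Sum>ys\<in>{ys::'w list. length ys = n}.
            f (take t xs) (take t ys) * joint p1 Qx q n xs ys)
       = (\<Sum>xs\<in>{xs::'w list. length xs = t}. \<Sum>ys\<in>{ys::'w list. length ys = t}.
            f xs ys * joint p1 Qx q t xs ys)"
  using assms(4)
proof (induction n rule: nat_induct_at_least)
  case base
  show ?case by (intro sum.cong refl) auto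
next
  case (Suc n)
  have "(\<Sum>xs\<in>{xs::'w list. length xs = Suc n}. \<Sum>ys\<in>{ys::'w list. length ys = Suc n}.
            f (take t xs) (take t ys) * joint p1 Qx q (Suc n) xs ys)
      = (\<Sum>xs\<in>{xs::'w list. length xs = n}. \<Sum>b\<in>UNIV. \<Sum>ys\<in>{ys::'w list. length ys = n}. \<Sum>y\<in>UNIV.
            f (take t (xs@[b])) (take t (ys@[y])) * joint p1 Qx q (Suc n) (xs@[b]) (ys@[y]))"
    by (simp only: sum_snoc)
  also have "\<dots> = (\<Sum>xs\<in>{xs::'w list. length xs = n}. \<Sum>ys\<in>{ys::'w list. length ys = n}. \<Sum>b\<in>UNIV. \<Sum>y\<in>UNIV.
            f (take t (xs@[b])) (take t (ys@[y])) * joint p1 Qx q (Suc n) (xs@[b]) (ys@[y]))"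
    by (intro sum.cong refl sum.swap)
  also have "\<dots> = (\<Sum>xs\<in>{xs::'w list. length xs = n}. \<Sum>ys\<in>{ys::'w list. length ys = n}.
            f (take t xs) (take t ys) * joint p1 Qx q n xs ys)"
    by (intro sum.cong refl, rule marg_step) (use assms Suc in auto)
  finally show ?case using Suc by simp
qed


definition Dd :: "('w::finite \<Rightarrow> real) \<Rightarrow> ('w \<Rightarrow> 'w \<Rightarrow> real) \<Rightarrow> 'w policy \<Rightarrow> nat \<Rightarrow> 'w \<Rightarrow> 'w list \<Rightarrow> real" where
  "Dd p1 Qx qh t a ys = (\<Sum>xs\<in>{xs. length xs = t}. if last xs = a then joint p1 Qx qh t xs ys else 0)"

definition Nn :: "('w::finite \<Rightarrow> real) \<Rightarrow> ('w \<Rightarrow> 'w \<Rightarrow> real) \<Rightarrow> 'w policy \<Rightarrow> nat \<Rightarrow> 'w \<Rightarrow> 'w \<Rightarrow> 'w list \<Rightarrow> 'w \<Rightarrow> real" where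
  "Nn p1 Qx qh t a b ys y = (\<Sum>xs\<in>{xs. length xs = t}.
      if last xs = a then joint p1 Qx qh t xs ys * qh (Suc t) (xs @ [b]) ys y else 0)"

definition QS :: "('w::finite \<Rightarrow> real) \<Rightarrow> ('w \<Rightarrow> 'w \<Rightarrow> real) \<Rightarrow> 'w policy \<Rightarrow> nat \<Rightarrow> 'w \<Rightarrow> 'w \<Rightarrow> 'w list \<Rightarrow> 'w \<Rightarrow> real" where
  "QS p1 Qx qh t a b ys y = (if Dd p1 Qx qh t a ys = 0 then 1 / real (card (UNIV::'w set))
       else Nn p1 Qx qh t a b ys y / Dd p1 Qx qh t a ys)"

definition qs_of :: "('w::finite \<Rightarrow> real) \<Rightarrow> ('w \<Rightarrow> 'w \<Rightarrow> real) \<Rightarrow> 'w policy \<Rightarrow> 'w policy" where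
  "qs_of p1 Qx qh = (\<lambda>t xs ys y. if t \<le> 1 then qh t xs ys y
       else QS p1 Qx qh (t - 1) (xs ! (t - 2)) (xs ! (t - 1)) ys y)"

context
  fixes p1 :: "'w::finite \<Rightarrow> real" and Qx :: "'w \<Rightarrow> 'w \<Rightarrow> real" and qh :: "'w policy"
  assumes p1d: "is_dist p1" and Qxd: "\<forall>a. is_dist (Qx a)" and qhd: "policy_H qh"
begin

lemma qh_nonneg: "t \<ge> 1 \<Longrightarrow> length xs = t \<Longrightarrow> length ys = t - 1 \<Longrightarrow> qh t xs ys w \<ge> 0"
  using qhd unfolding policy_H_def is_dist_def by blast

lemma Nn_nonneg: "t \<ge> 1 \<Longrightarrow> length ys = t \<Longrightarrow> Nn p1 Qx qh t a b ys y \<ge> 0"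
  unfolding Nn_def
  by (intro sum_nonneg) (auto intro!: mult_nonneg_nonneg joint_nonneg[OF p1d Qxd qhd] qh_nonneg)

lemma Dd_nonneg: "t \<ge> 1 \<Longrightarrow> length ys = t \<Longrightarrow> Dd p1 Qx qh t a ys \<ge> 0"
  unfolding Dd_def
  by (intro sum_nonneg) (auto intro!: joint_nonneg[OF p1d Qxd qhd])

lemma Nn_sum: "t \<ge> 1 \<Longrightarrow> length ys = t \<Longrightarrow> (\<Sum>y\<in>UNIV. Nn p1 Qx qh t a b ys y) = Dd p1 Qx qh t a ys"
proof -
  assume t: "t \<ge> 1" "length ys = t"
  have "(\<Sum>y\<in>UNIV. Nn p1 Qx qh t a b ys y) = (\<Sum>xs\<in>{xs. length xs = t}. \<Sum>y\<in>UNIV.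
      if last xs = a then joint p1 Qx qh t xs ys * qh (Suc t) (xs @ [b]) ys y else 0)"
    unfolding Nn_def by (rule sum.swap)
  also have "\<dots> = (\<Sum>xs\<in>{xs. length xs = t}. if last xs = a then joint p1 Qx qh t xs ys *
      (\<Sum>y\<in>UNIV. qh (Suc t) (xs @ [b]) ys y) else 0)"
    by (intro sum.cong refl) (auto simp: sum_distrib_left)
  also have "\<dots> = Dd p1 Qx qh t a ys"
    unfolding Dd_def using t by (intro sum.cong refl) (auto simp: qsum1[OF qhd])
  finally show ?thesis .
qed

lemma QS_mult: "t \<ge> 1 \<Longrightarrow> length ys = t \<Longrightarrow> QS p1 Qx qh t a b ys y * Dd p1 Qx qh t a ys = Nn p1 Qx qh t a b ys y"
proof -
  assume t: "t \<ge> 1" "length ys = t"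
  show ?thesis
  proof (cases "Dd p1 Qx qh t a ys = 0")
    case True
    have "(\<Sum>y\<in>UNIV. Nn p1 Qx qh t a b ys y) = 0" using Nn_sum[OF t] True by simp
    then have "\<forall>y\<in>UNIV. Nn p1 Qx qh t a b ys y = 0"
      using sum_nonneg_eq_0_iff[of UNIV "\<lambda>y. Nn p1 Qx qh t a b ys y"] Nn_nonneg[OF t] by simp
    then show ?thesis using True by simp
  next
    case False then show ?thesis unfolding QS_def by simp
  qed
qed

lemma QS_dist: "t \<ge> 1 \<Longrightarrow> length ys = t \<Longrightarrow> is_dist (QS p1 Qx qh t a b ys)"
proof -
  assume t: "t \<ge> 1" "length ys = t"
  show ?thesis
  proof (cases "Dd p1 Qx qh t a ys = 0")
    case True
    then show ?thesis unfolding is_dist_def QS_def by simp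
  next
    case False
    then have "Dd p1 Qx qh t a ys > 0" using Dd_nonneg[OF t, of a] by linarith
    moreover have "(\<Sum>y\<in>UNIV. Nn p1 Qx qh t a b ys y / Dd p1 Qx qh t a ys) = 1"
      using False Nn_sum[OF t] by (simp add: sum_divide_distrib[symmetric])
    ultimately show ?thesis using False Nn_nonneg[OF t] unfolding is_dist_def QS_def by simp
  qed
qed

lemma qs_S: "policy_S (qs_of p1 Qx qh)"
  unfolding policy_S_def
proof (intro conjI)
  show "policy_H (qs_of p1 Qx qh)"
    unfolding policy_H_def
  proof (intro allI impI)
    fix t :: nat and xs ys :: "'w list"
    assume "1 \<le> t" "length xs = t \<and> length ys = t - 1"
    then show "is_dist (qs_of p1 Qx qh t xs ys)"
      using qhd unfolding policy_H_def qs_of_def by (cases "t \<le> 1") (auto intro!: QS_dist)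
  qed
  show "\<forall>t\<ge>1. \<forall>xs xs' ys. length xs = t \<and> length xs' = t \<and> length ys = t - 1 \<and>
        drop (t - 2) xs = drop (t - 2) xs' \<longrightarrow> qs_of p1 Qx qh t xs ys = qs_of p1 Qx qh t xs' ys"
  proof (intro allI impI)
    fix t :: nat and xs xs' ys :: "'w list"
    assume a: "1 \<le> t" "length xs = t \<and> length xs' = t \<and> length ys = t - 1 \<and> drop (t - 2) xs = drop (t - 2) xs'"
    show "qs_of p1 Qx qh t xs ys = qs_of p1 Qx qh t xs' ys"
    proof (cases "t \<le> 1")
      case True
      then have "t = 1" using a by simp
      then show ?thesis using a unfolding qs_of_def by simp
    next
      case False
      have "drop (t - 2) xs ! 0 = drop (t - 2) xs' ! 0" "drop (t - 2) xs ! 1 = drop (t - 2) xs' ! 1"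
        using a by auto
      then have "xs ! (t - 2) = xs' ! (t - 2)" "xs ! (t - 1) = xs' ! (t - 1)"
        using a False by (auto simp: numeral_2_eq_2 Suc_diff_Suc)
      then show ?thesis using False unfolding qs_of_def by simp
    qed
  qed
qed


lemma step_q:
  assumes "t \<ge> 1" "length ys = t"
  shows "(\<Sum>xs\<in>{xs::'w list. length xs = Suc t}. F (drop (Suc t - 2) xs) * joint p1 Qx q (Suc t) xs (ys @ [y]))
    = (\<Sum>b\<in>UNIV. \<Sum>xs\<in>{xs::'w list. length xs = t}. (F [last xs, b] * Qx (last xs) b) *
          (joint p1 Qx q t xs ys * q (Suc t) (xs @ [b]) ys y))"
proof -
  have d: "\<And>(xs::'w list) b. length xs = t \<Longrightarrow> drop (Suc t - 2) (xs @ [b]) = [last xs, b]"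
  proof -
    fix xs :: "'w list" and b :: 'w assume l: "length xs = t"
    then have "drop (t - 1) xs = [last xs]" using assms(1) by (intro drop_last1) simp
    then show "drop (Suc t - 2) (xs @ [b]) = [last xs, b]" using l assms(1) by simp
  qed
  have "(\<Sum>xs\<in>{xs::'w list. length xs = Suc t}. F (drop (Suc t - 2) xs) * joint p1 Qx q (Suc t) xs (ys @ [y]))
     = (\<Sum>xs\<in>{xs::'w list. length xs = t}. \<Sum>b\<in>UNIV. F (drop (Suc t - 2) (xs @ [b])) * joint p1 Qx q (Suc t) (xs @ [b]) (ys @ [y]))"
    by (rule sum_snoc)
  also have "\<dots> = (\<Sum>xs\<in>{xs::'w list. length xs = t}. \<Sum>b\<in>UNIV. (F [last xs, b] * Qx (last xs) b) *
          (joint p1 Qx q t xs ys * q (Suc t) (xs @ [b]) ys y))"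
    by (intro sum.cong refl, subst d) (use assms in \<open>auto simp: joint_snoc\<close>)
  also have "\<dots> = (\<Sum>b\<in>UNIV. \<Sum>xs\<in>{xs::'w list. length xs = t}. (F [last xs, b] * Qx (last xs) b) *
          (joint p1 Qx q t xs ys * q (Suc t) (xs @ [b]) ys y))" by (rule sum.swap)
  finally show ?thesis .
qed


lemma qs_at:
  assumes "t \<ge> 1" "length xs = t"
  shows "qs_of p1 Qx qh (Suc t) (xs @ [b]) ys y = QS p1 Qx qh t (last xs) b ys y"
proof -
  have "xs \<noteq> []" using assms by auto
  then have "(xs @ [b]) ! (Suc t - 2) = last xs" using assms
    by (subst last_conv_nth) (auto simp: nth_append numeral_2_eq_2)
  moreover have "(xs @ [b]) ! (Suc t - 1) = b" using assms by (simp add: nth_append)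
  ultimately show ?thesis using assms unfolding qs_of_def by simp
qed

lemma qh_side:
  assumes "t \<ge> 1" "length ys = t"
  shows "(\<Sum>xs\<in>{xs::'w list. length xs = Suc t}. F (drop (Suc t - 2) xs) * joint p1 Qx qh (Suc t) xs (ys @ [y]))
    = (\<Sum>b\<in>UNIV. \<Sum>a\<in>UNIV. (F [a, b] * Qx a b) * Nn p1 Qx qh t a b ys y)"
  unfolding step_q[OF assms] Nn_def
  by (intro sum.cong refl group_last) (simp add: finite_len)

lemma main_ind:
  assumes "t \<ge> 1"
  shows "\<forall>F ys. length ys = t \<longrightarrow>
    (\<Sum>xs\<in>{xs::'w list. length xs = t}. F (drop (t - 2) xs) * joint p1 Qx qh t xs ys) =
    (\<Sum>xs\<in>{xs::'w list. length xs = t}. F (drop (t - 2) xs) * joint p1 Qx (qs_of p1 Qx qh) t xs ys)"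
  using assms
proof (induction t rule: nat_induct_at_least)
  case base
  have "\<And>xs ys. joint p1 Qx (qs_of p1 Qx qh) 1 xs ys = joint p1 Qx qh 1 xs ys"
    by (simp add: joint_def qs_of_def)
  then show ?case by simp
next
  case (Suc t)
  show ?case
  proof (intro allI impI)
    fix F and ys' :: "'w list"
    assume l': "length ys' = Suc t"
    define ys where "ys = butlast ys'"
    define y where "y = last ys'"
    have ys': "ys' = ys @ [y]" and l: "length ys = t" using l' unfolding ys_def y_def
      by (auto intro: append_butlast_last_id[symmetric])
    let ?G = "\<lambda>b u. F [last u, b] * Qx (last u) b * QS p1 Qx qh t (last u) b ys y"
    have "(\<Sum>xs\<in>{xs::'w list. length xs = Suc t}. F (drop (Suc t - 2) xs) * joint p1 Qx (qs_of p1 Qx qh) (Suc t) xs (ys @ [y]))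
      = (\<Sum>b\<in>UNIV. \<Sum>xs\<in>{xs::'w list. length xs = t}. (F [last xs, b] * Qx (last xs) b) *
          (joint p1 Qx (qs_of p1 Qx qh) t xs ys * qs_of p1 Qx qh (Suc t) (xs @ [b]) ys y))"
      by (rule step_q[OF Suc(1) l])
    also have "\<dots> = (\<Sum>b\<in>UNIV. \<Sum>xs\<in>{xs::'w list. length xs = t}. ?G b (drop (t - 2) xs) *
          joint p1 Qx (qs_of p1 Qx qh) t xs ys)"
      using Suc(1) by (intro sum.cong refl) (simp add: qs_at)
    also have "\<dots> = (\<Sum>b\<in>UNIV. \<Sum>xs\<in>{xs::'w list. length xs = t}. ?G b (drop (t - 2) xs) *
          joint p1 Qx qh t xs ys)"
    proof (rule sum.cong[OF refl])
      fix b :: 'w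
      show "(\<Sum>xs\<in>{xs::'w list. length xs = t}. ?G b (drop (t - 2) xs) * joint p1 Qx (qs_of p1 Qx qh) t xs ys) =
            (\<Sum>xs\<in>{xs::'w list. length xs = t}. ?G b (drop (t - 2) xs) * joint p1 Qx qh t xs ys)"
      proof -
        have IH: "\<And>G. (\<Sum>xs\<in>{xs::'w list. length xs = t}. G (drop (t - 2) xs) * joint p1 Qx qh t xs ys) =
           (\<Sum>xs\<in>{xs::'w list. length xs = t}. G (drop (t - 2) xs) * joint p1 Qx (qs_of p1 Qx qh) t xs ys)"
          using Suc(2) l by blast
        show ?thesis by (rule IH[of "?G b", symmetric])
      qed
    qed
    also have "\<dots> = (\<Sum>b\<in>UNIV. \<Sum>xs\<in>{xs::'w list. length xs = t}. ?G b xs * joint p1 Qx qh t xs ys)"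
      using Suc(1) by (intro sum.cong refl) simp
    also have "\<dots> = (\<Sum>b\<in>UNIV. \<Sum>a\<in>UNIV. (F [a, b] * Qx a b * QS p1 Qx qh t a b ys y) * Dd p1 Qx qh t a ys)"
      unfolding Dd_def by (intro sum.cong refl group_last) (simp add: finite_len)
    also have "\<dots> = (\<Sum>b\<in>UNIV. \<Sum>a\<in>UNIV. (F [a, b] * Qx a b) * Nn p1 Qx qh t a b ys y)"
      using QS_mult[OF Suc(1) l] by (intro sum.cong refl) (simp add: mult.assoc)
    also have "\<dots> = (\<Sum>xs\<in>{xs::'w list. length xs = Suc t}. F (drop (Suc t - 2) xs) * joint p1 Qx qh (Suc t) xs (ys @ [y]))"
      by (rule qh_side[OF Suc(1) l, symmetric])
    finally show "(\<Sum>xs\<in>{xs::'w list. length xs = Suc t}. F (drop (Suc t - 2) xs) * joint p1 Qx qh (Suc t) xs ys') =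
         (\<Sum>xs\<in>{xs::'w list. length xs = Suc t}. F (drop (Suc t - 2) xs) * joint p1 Qx (qs_of p1 Qx qh) (Suc t) xs ys')"
      unfolding ys' by simp
  qed
qed


lemma prob_red:
  assumes "policy_H q" "1 \<le> t" "t \<le> n"
  shows "prob_ev p1 Qx q n (\<lambda>xs ys. R (drop (t - 2) (take t xs)) (take t ys)) =
    (\<Sum>ys\<in>{ys::'w list. length ys = t}. \<Sum>xs\<in>{xs::'w list. length xs = t}.
        (\<lambda>u. if R u ys then 1 else 0) (drop (t - 2) xs) * joint p1 Qx q t xs ys)"
proof -
  let ?f = "\<lambda>xs ys. if R (drop (t - 2) xs) ys then (1::real) else 0"
  have "prob_ev p1 Qx q n (\<lambda>xs ys. R (drop (t - 2) (take t xs)) (take t ys)) =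
     (\<Sum>xs\<in>{xs::'w list. length xs = n}. \<Sum>ys\<in>{ys::'w list. length ys = n}.
            ?f (take t xs) (take t ys) * joint p1 Qx q n xs ys)"
    unfolding prob_ev_def by (intro sum.cong refl) simp
  also have "\<dots> = (\<Sum>xs\<in>{xs::'w list. length xs = t}. \<Sum>ys\<in>{ys::'w list. length ys = t}.
            ?f xs ys * joint p1 Qx q t xs ys)"
    by (rule marg[OF Qxd assms])
  also have "\<dots> = (\<Sum>ys\<in>{ys::'w list. length ys = t}. \<Sum>xs\<in>{xs::'w list. length xs = t}.
            ?f xs ys * joint p1 Qx q t xs ys)"
    by (rule sum.swap)
  finally show ?thesis by simp
qed

lemma key:
  assumes "1 \<le> t" "t \<le> n"
  shows "prob_ev p1 Qx qh n (\<lambda>xs ys. R (drop (t - 2) (take t xs)) (take t ys)) =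
         prob_ev p1 Qx (qs_of p1 Qx qh) n (\<lambda>xs ys. R (drop (t - 2) (take t xs)) (take t ys))"
proof -
  have qsH: "policy_H (qs_of p1 Qx qh)" using qs_S unfolding policy_S_def by blast
  show ?thesis
    unfolding prob_red[OF qhd assms] prob_red[OF qsH assms]
  proof (rule sum.cong[OF refl])
    fix ys :: "'w list" assume "ys \<in> {ys. length ys = t}"
    then show "(\<Sum>xs\<in>{xs::'w list. length xs = t}. (\<lambda>u. if R u ys then 1 else 0) (drop (t - 2) xs) * joint p1 Qx qh t xs ys) =
      (\<Sum>xs\<in>{xs::'w list. length xs = t}. (\<lambda>u. if R u ys then 1 else 0) (drop (t - 2) xs) * joint p1 Qx (qs_of p1 Qx qh) t xs ys)"
      using main_ind[OF assms(1), rule_format, of ys "\<lambda>u. if R u ys then 1 else 0"] by simp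
  qed
qed

lemma cmi_eq:
  assumes "1 \<le> t" "t \<le> n"
  shows "cmi p1 Qx qh n t = cmi p1 Qx (qs_of p1 Qx qh) n t"
proof -
  note K = key[OF assms]
  have E1: "\<And>u y c. prob_ev p1 Qx qh n (\<lambda>xs ys. drop (t - 2) (take t xs) = u \<and> ys ! (t - 1) = y \<and> take (t - 1) ys = c)
     = prob_ev p1 Qx (qs_of p1 Qx qh) n (\<lambda>xs ys. drop (t - 2) (take t xs) = u \<and> ys ! (t - 1) = y \<and> take (t - 1) ys = c)"
    using K[of "\<lambda>a b. a = _ \<and> b ! (t - 1) = _ \<and> take (t - 1) b = _"] assms by simp
  have E2: "\<And>u c. prob_ev p1 Qx qh n (\<lambda>xs ys. drop (t - 2) (take t xs) = u \<and> take (t - 1) ys = c)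
     = prob_ev p1 Qx (qs_of p1 Qx qh) n (\<lambda>xs ys. drop (t - 2) (take t xs) = u \<and> take (t - 1) ys = c)"
    using K[of "\<lambda>a b. a = _ \<and> take (t - 1) b = _"] assms by simp
  have E3: "\<And>y c. prob_ev p1 Qx qh n (\<lambda>xs ys. ys ! (t - 1) = y \<and> take (t - 1) ys = c)
     = prob_ev p1 Qx (qs_of p1 Qx qh) n (\<lambda>xs ys. ys ! (t - 1) = y \<and> take (t - 1) ys = c)"
    using K[of "\<lambda>a b. b ! (t - 1) = _ \<and> take (t - 1) b = _"] assms by simp
  have E4: "\<And>c. prob_ev p1 Qx qh n (\<lambda>xs ys. take (t - 1) ys = c)
     = prob_ev p1 Qx (qs_of p1 Qx qh) n (\<lambda>xs ys. take (t - 1) ys = c)"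
    using K[of "\<lambda>a b. take (t - 1) b = _"] assms by simp
  show ?thesis by (simp only: cmi_def Let_def E1 E2 E3 E4)
qed

end

theorem lemma2:
  fixes p1 :: "'w::finite \<Rightarrow> real" and Qx :: "'w \<Rightarrow> 'w \<Rightarrow> real" and qh :: "'w policy"
  assumes "is_dist p1"
    and "\<forall>a. is_dist (Qx a)"
    and "policy_H qh"
  shows "\<exists>qs. policy_S qs \<and>
           (\<forall>n\<ge>1. (\<Sum>t=1..n. cmi p1 Qx qh n t) = (\<Sum>t=1..n. cmi p1 Qx qs n t))"
  using qs_S[OF assms] cmi_eq[OF assms] by (intro exI[of _ "qs_of p1 Qx qh"]) auto

end
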